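(* Consider the continuous Bomber Problem described in the context, with parameter $v\in(0,1]$. Let $x=x_t>0$ be defined for small $t>0$ with $|\log t|/x_t\to\rho\in(0,\infty)$ as $t\to 0$. If there is $\gamma\in(0,1]$ such that $H(x_t,t)\ge 1-e^{-\gamma x_t+o(x_t)}$ as $t\to 0$, then $K(x_t,t)\ge \gamma x_t+o(x_t)$ as $t\to 0$.
   Context: The Bomber Problem: a bomber holding an amount $x\ge 0$ of (continuously divisible) ammunition must survive for a remaining time $t\ge 0$. Enemies arrive according to a time-homogeneous Poisson process of rate 1. Upon meeting an enemy, the bomber chooses an amount $y\in[0,x]$ of its current ammunition to fire; the enemy survives this with probability $e^{-y}$, and if it survives it destroys the bomber with probability $v\in(0,1]$. Thus the bomber survives an encounter in which it spends $y$ with probability $a(y)=1-ve^{-y}$, and continues with ammunition $x-y$. $P(x,t)$ denotes the optimal probability that the bomber survives for time $t$ starting with ammunition $x$; $H(x,t)$ denotes the optimal conditional probability of survival given that an enemy is encountered at remaining time $t$ while holding ammunition $x$; and $K(x,t)\in[0,x]$ denotes the optimal amount of ammunition to fire at that enemy, so that $H(x,t)=a(K(x,t))P(x-K(x,t),t)$. The notation $o(x_t)$ refers to a quantity $r_t$ with $r_t/x_t\to 0$ as $t\to 0$. *)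

theory Defs
  imports "HOL-Analysis.Analysis" "HOL-Library.Landau_Symbols"
begin

text \<open>Survival probability of an encounter in which the bomber spends y.\<close>
definition bomber_a :: "real \<Rightarrow> real \<Rightarrow> real" where
  "bomber_a v y = 1 - v * exp (- y)"

definition bomber_H :: "real \<Rightarrow> (real \<Rightarrow> real \<Rightarrow> real) \<Rightarrow> real \<Rightarrow> real \<Rightarrow> real" where
  "bomber_H v P x t = (SUP y\<in>{0..x}. bomber_a v y * P (x - y) t)"

text \<open>P is the optimal survival probability: the (unique) [0,1]-valued solution of the
  dynamic programming equation obtained by conditioning on the first encounter
  (Poisson rate 1):  P(x,t) = e^{-t} + int_0^t e^{-(t-s)} H(x,s) ds.\<close>
definition is_bomber_P :: "real \<Rightarrow> (real \<Rightarrow> real \<Rightarrow> real) \<Rightarrow> bool" where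
  "is_bomber_P v P \<longleftrightarrow>
     (\<forall>x\<ge>0. \<forall>t\<ge>0. 0 \<le> P x t \<and> P x t \<le> 1) \<and>
     (\<forall>x\<ge>0. \<forall>t\<ge>0.
        ((\<lambda>s. exp (- (t - s)) * bomber_H v P x s) integrable_on {0..t}) \<and>
        P x t = exp (- t) + integral {0..t} (\<lambda>s. exp (- (t - s)) * bomber_H v P x s))"

definition is_bomber_K :: "real \<Rightarrow> (real \<Rightarrow> real \<Rightarrow> real) \<Rightarrow> (real \<Rightarrow> real \<Rightarrow> real) \<Rightarrow> bool" where
  "is_bomber_K v P K \<longleftrightarrow>
     (\<forall>x\<ge>0. \<forall>t\<ge>0. 0 \<le> K x t \<and> K x t \<le> x \<and>
        bomber_H v P x t = bomber_a v (K x t) * P (x - K x t) t)"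

end

theory Submission
  imports Defs "HOL-Real_Asymp.Real_Asymp"
begin

theorem lemma3:
  fixes v \<rho> \<gamma> :: real and P K :: "real \<Rightarrow> real \<Rightarrow> real" and x :: "real \<Rightarrow> real"
  assumes v: "0 < v" "v \<le> 1"
    and P: "is_bomber_P v P"
    and K: "is_bomber_K v P K"
    and xpos: "eventually (\<lambda>t. x t > 0) (at_right 0)"
    and \<rho>: "0 < \<rho>" "((\<lambda>t. \<bar>ln t\<bar> / x t) \<longlongrightarrow> \<rho>) (at_right 0)"
    and \<gamma>: "0 < \<gamma>" "\<gamma> \<le> 1"
    and H: "\<exists>r. r \<in> o[at_right 0](x) \<and>
              eventually (\<lambda>t. bomber_H v P (x t) t \<ge> 1 - exp (- \<gamma> * x t + r t)) (at_right 0)"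
  shows "\<exists>r. r \<in> o[at_right 0](x) \<and>
           eventually (\<lambda>t. K (x t) t \<ge> \<gamma> * x t + r t) (at_right 0)"
proof -
  obtain r where r: "r \<in> o[at_right 0](x)"
    and ev: "eventually (\<lambda>t. bomber_H v P (x t) t \<ge> 1 - exp (- \<gamma> * x t + r t)) (at_right 0)"
    using H by blast
  have lnt: "filterlim (\<lambda>t. \<bar>ln t\<bar>) at_top (at_right (0::real))" by real_asymp
  have inv: "((\<lambda>t. inverse (\<bar>ln t\<bar> / x t)) \<longlongrightarrow> inverse \<rho>) (at_right 0)"
    using \<rho> by (intro tendsto_inverse) auto
  have "filterlim (\<lambda>t. inverse (\<bar>ln t\<bar> / x t) * \<bar>ln t\<bar>) at_top (at_right 0)"
    by (rule filterlim_tendsto_pos_mult_at_top[OF inv _ lnt]) (use \<rho> in auto)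
  moreover have "eventually (\<lambda>t. inverse (\<bar>ln t\<bar> / x t) * \<bar>ln t\<bar> = x t) (at_right (0::real))"
  proof -
    have "eventually (\<lambda>t. t < (1::real)) (at_right 0)"
      by real_asymp
    moreover have "eventually (\<lambda>t. 0 < (t::real)) (at_right 0)"
      by (simp add: eventually_at_right_less)
    ultimately show ?thesis using xpos
      by eventually_elim (auto simp: field_simps)
  qed
  ultimately have xtop: "filterlim x at_top (at_right 0)"
    using filterlim_cong by (metis (mono_tags, lifting) eventually_mono filterlim_cong)
  have c: "(\<lambda>t. ln v) \<in> o[at_right 0](x)"
  proof (rule landau_o.smallI)
    fix e :: real assume e: "0 < e"
    have "eventually (\<lambda>t. x t \<ge> \<bar>ln v\<bar> / e) (at_right 0)"
      using xtop by (simp add: filterlim_at_top)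
    then show "eventually (\<lambda>t. norm (ln v) \<le> e * norm (x t)) (at_right 0)"
    proof eventually_elim
      case (elim t)
      then have "\<bar>ln v\<bar> \<le> e * x t" using e by (simp add: field_simps)
      then show ?case using elim e by (smt (verit) divide_nonneg_pos abs_ge_zero real_norm_def)
    qed
  qed
  have r2: "(\<lambda>t. ln v - r t) \<in> o[at_right 0](x)"
    using c r by (rule sum_in_smallo(2))
  have "eventually (\<lambda>t. K (x t) t \<ge> \<gamma> * x t + (ln v - r t)) (at_right 0)"
    using ev xpos eventually_at_right_less[of 0]
  proof eventually_elim
    case (elim t)
    let ?k = "K (x t) t"
    have kk: "0 \<le> ?k" "?k \<le> x t" "bomber_H v P (x t) t = bomber_a v ?k * P (x t - ?k) t"
      using K elim unfolding is_bomber_K_def by auto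
    have P1: "P (x t - ?k) t \<le> 1" using P kk elim unfolding is_bomber_P_def by auto
    have a0: "0 \<le> bomber_a v ?k" unfolding bomber_a_def using v kk
      by (smt (verit) exp_le_one_iff mult_le_one exp_ge_zero)
    have "bomber_H v P (x t) t \<le> bomber_a v ?k" using kk(3) P1 a0
      by (simp add: mult_left_le)
    then have "v * exp (- ?k) \<le> exp (- \<gamma> * x t + r t)"
      using elim unfolding bomber_a_def by linarith
    then have "ln (v * exp (- ?k)) \<le> - \<gamma> * x t + r t"
      using v ln_le_cancel_iff[of "v * exp (- ?k)" "exp (- \<gamma> * x t + r t)"] by simp
    then show ?case using v by (simp add: ln_mult)
  qed
  with r2 show ?thesis by blast
qed

end
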